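(* Let $a\in(0,1)$, $\sigma^2>0$, $M\ge1$, and let $\mu$ satisfy $0<\mu\sigma^2<2$. Then all eigenvalues of $$E_d=\begin{bmatrix}1-\mu\sigma^2&0&0\\0&(1-\mu\sigma^2)a&-\sqrt{2-2a}\\0&(1-\mu\sigma^2)a\sqrt{\tfrac{1-a}{2}}&a\end{bmatrix}$$ lie strictly inside the unit circle, and consequently the exact diffusion error $\widetilde{\mathcal{Z}}_i=[\widetilde{\mathcal{W}}_i;\widetilde{\mathcal{Y}}_i]$, which evolves as $\widetilde{\mathcal{Z}}_i=(Q_d\otimes I_M)\widetilde{\mathcal{Z}}_{i-1}$ with $\widetilde{\mathcal{Y}}_0\in\mathrm{range}(V\otimes I_M)$, converges to $0$.
   Context: Two-agent mean-square-error setting with Hessians $R_{u,1}=R_{u,2}=\sigma^2I_M$. $A=\begin{bmatrix}a&1-a\\1-a&a\end{bmatrix}$, $P=\frac12I_2$, $\bar A=(I_2+A)/2$; the symmetric positive semidefinite matrix $(P-AP)/2$ has eigendecomposition $U\Sigma U^{\mathsf T}$ and $V=U\Sigma^{1/2}U^{\mathsf T}$. $Q_d=\begin{bmatrix}(1-\mu\sigma^2)\bar A&-2V\\(1-\mu\sigma^2)V\bar A&\bar A\end{bmatrix}\in\mathbb{R}^{4\times4}$. The error vector $\widetilde{\mathcal{Z}}_i\in\mathbb{R}^{4M}$ consists of $\widetilde{\mathcal{W}}_i\in\mathbb{R}^{2M}$ followed by $\widetilde{\mathcal{Y}}_i\in\mathbb{R}^{2M}$, and the initial dual error $\widetilde{\mathcal{Y}}_0$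 lies in the range of $V\otimes I_M$ (as it does for the exact diffusion initialization $\mathcal{Y}_0=(V\otimes I_M)\mathcal{W}_0$ and dual optimum in that range). *)

theory Defs
  imports Complex_Main "Jordan_Normal_Form.Char_Poly"
begin

definition kron :: "'a::times mat \<Rightarrow> 'a mat \<Rightarrow> 'a mat" where
  "kron A B = mat (dim_row A * dim_row B) (dim_col A * dim_col B)
     (\<lambda>(i,j). A $$ (i div dim_row B, j div dim_col B) * B $$ (i mod dim_row B, j mod dim_col B))"

definition A_mat :: "real \<Rightarrow> real mat" where
  "A_mat a = mat_of_rows_list 2 [[a, 1 - a], [1 - a, a]]"

definition P_mat :: "real mat" where
  "P_mat = (1/2) \<cdot>\<^sub>m 1\<^sub>m 2"

definition Abar :: "real \<Rightarrow> real mat" where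
  "Abar a = (1/2) \<cdot>\<^sub>m (1\<^sub>m 2 + A_mat a)"

definition D_mat :: "real \<Rightarrow> real mat" where
  "D_mat a = (1/2) \<cdot>\<^sub>m (P_mat - A_mat a * P_mat)"

definition diag_sqrt :: "real mat \<Rightarrow> real mat" where
  "diag_sqrt S = mat (dim_row S) (dim_col S) (\<lambda>(i,j). if i = j then sqrt (S $$ (i,i)) else 0)"

definition eigdecomp :: "real mat \<Rightarrow> real mat \<Rightarrow> real mat \<Rightarrow> bool" where
  "eigdecomp D U S \<longleftrightarrow> U \<in> carrier_mat 2 2 \<and> S \<in> carrier_mat 2 2 \<and>
     U * transpose_mat U = 1\<^sub>m 2 \<and> transpose_mat U * U = 1\<^sub>m 2 \<and>
     (\<forall>i<2. \<forall>j<2. i \<noteq> j \<longrightarrow> S $$ (i,j) = 0) \<and> (\<forall>i<2. S $$ (i,i) \<ge> 0) \<and>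
     D = U * S * transpose_mat U"

definition Q_d :: "real \<Rightarrow> real \<Rightarrow> real \<Rightarrow> real mat \<Rightarrow> real mat" where
  "Q_d a \<mu> \<sigma>2 V = four_block_mat
      ((1 - \<mu> * \<sigma>2) \<cdot>\<^sub>m Abar a) ((-2) \<cdot>\<^sub>m V)
      ((1 - \<mu> * \<sigma>2) \<cdot>\<^sub>m (V * Abar a)) (Abar a)"

definition E_d :: "real \<Rightarrow> real \<Rightarrow> real \<Rightarrow> real mat" where
  "E_d a \<mu> \<sigma>2 = mat_of_rows_list 3
     [[1 - \<mu> * \<sigma>2, 0, 0],
      [0, (1 - \<mu> * \<sigma>2) * a, - sqrt (2 - 2 * a)],
      [0, (1 - \<mu> * \<sigma>2) * a * sqrt ((1 - a) / 2), a]]"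

end

theory Submission
  imports Defs
begin

lemma contract:
  fixes f g :: "nat \<Rightarrow> real" and r :: real
  assumes r: "0 \<le> r" "r < 1" and f: "\<And>n. 0 \<le> f n"
    and rec: "\<And>n. f (Suc n) \<le> r * f n + g n" and g: "g \<longlonglongrightarrow> 0"
  shows "f \<longlonglongrightarrow> 0"
proof (rule LIMSEQ_I)
  fix e :: real assume e: "0 < e"
  have "e * (1 - r) / 2 > 0" using e r by simp
  from LIMSEQ_D[OF g this] obtain N where N0: "\<forall>n\<ge>N. norm (g n - 0) < e * (1 - r) / 2" by blast
  have N: "norm (g n) < e * (1 - r) / 2" if "n \<ge> N" for n using N0 that by simp
  define H where "H = max (f N - e/2) 0"
  have H: "f (N + k) - e/2 \<le> r ^ k * H" for k
  proof (induction k)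
    case 0 then show ?case by (simp add: H_def)
  next
    case (Suc k)
    have g1: "g (N+k) < e * (1 - r) / 2" using N[of "N+k"] by auto
    have r1: "f (N + Suc k) \<le> r * f (N+k) + g (N+k)" using rec[of "N+k"] by simp
    have eq: "r * (f (N+k) - e/2) = r * f (N+k) - r * e / 2" "e * (1 - r) / 2 = e/2 - r*e/2"
      by (simp_all add: algebra_simps diff_divide_distrib)
    have "f (N + Suc k) - e/2 \<le> r * (f (N+k) - e/2)" using g1 r1 eq by linarith
    also have "\<dots> \<le> r * (r^k * H)" using Suc r by (intro mult_left_mono) auto
    finally show ?case by simp
  qed
  have "(\<lambda>k. r ^ k * H) \<longlonglongrightarrow> 0 * H"
    by (intro tendsto_mult LIMSEQ_power_zero tendsto_const) (use r in simp)
  hence "(\<lambda>k. r ^ k * H) \<longlonglongrightarrow> 0" by simp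
  from LIMSEQ_D[OF this, of "e/2"] e obtain K where K0: "\<forall>k\<ge>K. norm (r^k * H - 0) < e/2" by auto
  have K: "norm (r^k * H) < e/2" if "k \<ge> K" for k using K0 that by simp
  show "\<exists>no. \<forall>n\<ge>no. norm (f n - 0) < e"
  proof (intro exI allI impI)
    fix n assume n: "n \<ge> N + K"
    define k where "k = n - N"
    have k: "n = N + k" "k \<ge> K" using n unfolding k_def by auto
    have "f n - e/2 \<le> r^k * H" using H[of k] k(1) by simp
    moreover have "r^k * H < e/2" using K[OF k(2)] by simp
    ultimately show "norm (f n - 0) < e" using f[of n] by simp
  qed
qed
lemma rec2_conv:
  fixes w :: "nat \<Rightarrow> complex" and l1 l2 :: complex
  assumes l: "cmod l1 < 1" "cmod l2 < 1"
    and rec: "\<And>i. w (Suc (Suc i)) = (l1+l2) * w (Suc i) - l1*l2 * w i"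
  shows "w \<longlonglongrightarrow> 0"
proof -
  define e where "e i = w (Suc i) - l2 * w i" for i
  have eS: "e (Suc i) = l1 * e i" for i unfolding e_def using rec[of i] by (simp add: algebra_simps)
  have ep: "e i = l1 ^ i * e 0" for i by (induction i) (simp_all add: eS)
  have "(\<lambda>i. l1 ^ i * e 0) \<longlonglongrightarrow> 0 * e 0"
    by (intro tendsto_mult LIMSEQ_power_zero tendsto_const) (use l in simp)
  moreover have "e = (\<lambda>i. l1 ^ i * e 0)" using ep by (intro ext) 
  ultimately have e0: "e \<longlonglongrightarrow> 0" by simp
  have "(\<lambda>i. norm (w i)) \<longlonglongrightarrow> 0"
  proof (rule contract[where r = "cmod l2" and g = "\<lambda>i. norm (e i)"])
    show "0 \<le> cmod l2" "cmod l2 < 1" using l by auto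
    show "0 \<le> norm (w n)" for n by simp
    show "norm (w (Suc n)) \<le> cmod l2 * norm (w n) + norm (e n)" for n
    proof -
      have "w (Suc n) = l2 * w n + e n" unfolding e_def by simp
      hence "norm (w (Suc n)) \<le> norm (l2 * w n) + norm (e n)" by (metis norm_triangle_ineq)
      thus ?thesis by (simp add: norm_mult)
    qed
    show "(\<lambda>i. norm (e i)) \<longlonglongrightarrow> 0" using e0 by (simp add: tendsto_norm_zero_iff)
  qed
  thus ?thesis by (simp add: tendsto_norm_zero_iff)
qed

lemma rec2_real:
  fixes w :: "nat \<Rightarrow> real" and t d :: real
  assumes roots: "\<And>z::complex. z^2 - of_real t * z + of_real d = 0 \<Longrightarrow> cmod z < 1"
    and rec: "\<And>i. w (Suc (Suc i)) = t * w (Suc i) - d * w i"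
  shows "w \<longlonglongrightarrow> 0"
proof -
  define s where "s = csqrt (of_real t ^ 2 - 4 * of_real d)"
  have s2: "s^2 = of_real t ^ 2 - 4 * of_real d" unfolding s_def by (rule power2_csqrt)
  define l1 where "l1 = (of_real t + s) / 2"
  define l2 where "l2 = (of_real t - s) / 2"
  have sum: "l1 + l2 = of_real t" unfolding l1_def l2_def by (simp add: field_simps)
  have prod: "l1 * l2 = of_real d"
  proof -
    have "l1 * l2 = (of_real t ^ 2 - s^2) / 4" unfolding l1_def l2_def by (simp add: field_simps power2_eq_square)
    thus ?thesis using s2 by simp
  qed
  have r1: "l1^2 - of_real t * l1 + of_real d = 0"
    unfolding sum[symmetric] prod[symmetric] by (simp add: algebra_simps power2_eq_square)
  have r2: "l2^2 - of_real t * l2 + of_real d = 0"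
    unfolding sum[symmetric] prod[symmetric] by (simp add: algebra_simps power2_eq_square)
  have "(\<lambda>i. complex_of_real (w i)) \<longlonglongrightarrow> 0"
  proof (rule rec2_conv)
    show "cmod l1 < 1" "cmod l2 < 1" using roots r1 r2 by auto
    show "complex_of_real (w (Suc (Suc i))) = (l1 + l2) * complex_of_real (w (Suc i)) - l1 * l2 * complex_of_real (w i)" for i
      using rec[of i] sum prod by simp
  qed
  thus ?thesis by (simp add: tendsto_of_real_iff[where c = 0, simplified])
qed
lemma quad_stable:
  fixes z :: complex and a c :: real
  assumes "0 < a" "a < 1" "-1 < c" "c < 1"
    and eq: "z^2 - of_real (a*(1+c)) * z + of_real (c*a) = 0"
  shows "cmod z < 1"
proof -
  define x y where "x = Re z" "y = Im z"
  define b q where "b = a*(1+c)" "q = c*a"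
  have re: "x^2 - y^2 - b*x + q = 0" using arg_cong[OF eq, of Re]
    by (simp add: x_y_def b_q_def power2_eq_square)
  have im: "2*x*y - b*y = 0" using arg_cong[OF eq, of Im]
    by (simp add: x_y_def b_q_def power2_eq_square)
  have ca1: "c*a < a" using assms by simp
  have ca2: "-a < c*a" using mult_strict_right_mono[of "-1" c a] assms by simp
  have q1: "q < 1" "-1 < q" using ca1 ca2 assms unfolding b_q_def by linarith+
  have "x^2 + y^2 < 1"
  proof (cases "y = 0")
    case False
    hence "2*x - b = 0" using im by (metis mult.commute mult_eq_0_iff right_diff_distrib)
    hence "b*x = 2*x*x" by (simp add: algebra_simps)
    hence "x^2 + y^2 = q" using re unfolding power2_eq_square by linarith
    thus ?thesis using q1 by simp
  next
    case True
    have b0: "0 < b" using assms unfolding b_q_def by (intro mult_pos_pos) auto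
    have "b < 1 * 2" using assms unfolding b_q_def by (intro mult_strict_mono) auto
    hence b: "0 < b" "b < 2" using b0 by auto
    have p1: "1 - b + q > 0" "1 + b + q > 0" using assms b0 unfolding b_q_def by (simp_all add: algebra_simps)
    have "x^2 - b*x + q = 0" using re True by simp
    have "\<not> x \<ge> 1"
    proof
      assume h: "x \<ge> 1"
      have "x^2 - b*x + q = (1 - b + q) + (x - 1)*(x + 1 - b)" by (simp add: algebra_simps power2_eq_square)
      moreover have "(x - 1)*(x + 1 - b) \<ge> 0" using h b by simp
      ultimately show False using p1 \<open>x^2 - b*x + q = 0\<close> by linarith
    qed
    moreover have "\<not> x \<le> -1"
    proof
      assume h: "x \<le> -1"
      have "x^2 - b*x + q = (1 + b + q) + (x + 1)*(x - 1 - b)" by (simp add: algebra_simps power2_eq_square)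
      moreover have "(x + 1)*(x - 1 - b) \<ge> 0" using h b by (simp add: mult_nonpos_nonpos)
      ultimately show False using p1 \<open>x^2 - b*x + q = 0\<close> by linarith
    qed
    ultimately show ?thesis using True by (simp add: abs_square_less_1)
  qed
  moreover have "cmod z = sqrt (x^2 + y^2)" unfolding x_y_def by (rule norm_complex_def)
  ultimately show ?thesis by (metis real_sqrt_lt_1_iff)
qed
lemma sum_blocks:
  fixes f :: "nat \<Rightarrow> 'b::comm_monoid_add"
  shows "(\<Sum>l<n*M. f l) = (\<Sum>j<n. \<Sum>m<M. f (j*M+m))"
proof -
  have "(\<Sum>l<n*M. f l) = (\<Sum>j<n. sum f {j*M..<j*M+M})" by (rule sum.nat_group[symmetric])
  also have "\<dots> = (\<Sum>j<n. \<Sum>m<M. f (j*M+m))"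
  proof (rule sum.cong[OF refl])
    fix j
    have "sum f {0 + j*M..<M + j*M} = (\<Sum>m = 0..<M. f (m + j*M))" by (rule sum.shift_bounds_nat_ivl)
    thus "sum f {j*M..<j*M+M} = (\<Sum>m<M. f (j*M+m))" by (simp add: add.commute atLeast0LessThan)
  qed
  finally show ?thesis .
qed

lemma kron_dims[simp]: "dim_row (kron A B) = dim_row A * dim_row B" "dim_col (kron A B) = dim_col A * dim_col B"
  unfolding kron_def by simp_all

lemma kron_mult:
  fixes A :: "real mat" and x :: "real vec"
  assumes A: "A \<in> carrier_mat n n'" and x: "x \<in> carrier_vec (n'*M)" and j: "j < n" and m: "m < M"
  shows "(kron A (1\<^sub>m M) *\<^sub>v x) $ (j*M+m) = (\<Sum>j'<n'. A $$ (j,j') * x $ (j'*M+m))"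
proof -
  have jm: "j*M+m < n*M"
  proof -
    have "j*M+m < j*M+M" using m by simp
    also have "\<dots> = Suc j * M" by simp
    also have "\<dots> \<le> n*M" using j by (intro mult_right_mono) auto
    finally show ?thesis .
  qed
  have jd: "(j*M+m) div M = j" "(j*M+m) mod M = m" using m by auto
  have "(kron A (1\<^sub>m M) *\<^sub>v x) $ (j*M+m) = (\<Sum>l<n'*M. kron A (1\<^sub>m M) $$ (j*M+m, l) * x $ l)"
    using A x jm by (simp add: scalar_prod_def atLeast0LessThan mult.commute)
  also have "\<dots> = (\<Sum>j'<n'. \<Sum>m'<M. kron A (1\<^sub>m M) $$ (j*M+m, j'*M+m') * x $ (j'*M+m'))"
    by (rule sum_blocks)
  also have "\<dots> = (\<Sum>j'<n'. \<Sum>m'<M. (if m' = m then A $$ (j,j') * x $ (j'*M+m') else 0))"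
  proof (intro sum.cong refl)
    fix j' m' assume j': "j' \<in> {..<n'}" and m': "m' \<in> {..<M}"
    have lt: "j'*M+m' < n'*M"
    proof -
      have "j'*M+m' < j'*M+M" using m' by simp
      also have "\<dots> = Suc j' * M" by simp
      also have "\<dots> \<le> n'*M" using j' by (intro mult_right_mono) auto
      finally show ?thesis .
    qed
    have jd': "(j'*M+m') div M = j'" "(j'*M+m') mod M = m'" using m' by auto
    show "kron A (1\<^sub>m M) $$ (j*M+m, j'*M+m') * x $ (j'*M+m') = (if m' = m then A $$ (j,j') * x $ (j'*M+m') else 0)"
      using A jm lt m m' unfolding kron_def by (simp add: jd jd')
  qed
  also have "\<dots> = (\<Sum>j'<n'. A $$ (j,j') * x $ (j'*M+m))"
    using m by (simp add: sum.delta')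
  finally show ?thesis .
qed
lemma less2: "(i::nat) < 2 \<Longrightarrow> i = 0 \<or> i = 1" by auto

lemma mult2:
  fixes A B :: "'a::comm_ring_1 mat"
  assumes "A \<in> carrier_mat 2 2" "B \<in> carrier_mat 2 2" "i < 2" "j < 2"
  shows "(A*B) $$ (i,j) = A$$(i,0)*B$$(0,j) + A$$(i,1)*B$$(1,j)"
  using assms by (auto simp: scalar_prod_def numeral_2_eq_2)

lemma A_idx: "A_mat a $$ (0,0) = a" "A_mat a $$ (0,1) = 1 - a" "A_mat a $$ (1,0) = 1 - a" "A_mat a $$ (1,1) = a"
  unfolding A_mat_def by (simp_all add: mat_of_rows_list_def)

lemma A_idx': "A_mat a $$ (0,Suc 0) = 1 - a" "A_mat a $$ (Suc 0,0) = 1 - a" "A_mat a $$ (Suc 0,Suc 0) = a"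
  unfolding A_mat_def by (simp_all add: mat_of_rows_list_def)

lemma A_car: "A_mat a \<in> carrier_mat 2 2"
proof -
  have "length [[a, 1 - a], [1 - a, a]] = 2" by simp
  thus ?thesis unfolding A_mat_def mat_of_rows_list_def by (metis mat_carrier)
qed

lemma P_car: "P_mat \<in> carrier_mat 2 2" unfolding P_mat_def by (rule smult_carrier_mat, rule one_carrier_mat)
lemma P_idx: assumes "i < 2" "j < 2" shows "P_mat $$ (i,j) = (if i = j then 1/2 else 0)"
proof -
  have "P_mat $$ (i,j) = 1/2 * (1\<^sub>m 2 $$ (i,j))" unfolding P_mat_def using assms by (intro index_smult_mat) auto
  thus ?thesis using assms by auto
qed

lemma D_car: "D_mat a \<in> carrier_mat 2 2"
  unfolding D_mat_def by (rule smult_carrier_mat, rule minus_carrier_mat, rule mult_carrier_mat[OF A_car P_car])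

lemma D_explicit: "D_mat a = mat_of_rows_list 2 [[(1-a)/4, -(1-a)/4], [-(1-a)/4, (1-a)/4]]"
proof (rule eq_matI)
  have mc: "mat_of_rows_list 2 [[(1-a)/4, -(1-a)/4], [-(1-a)/4, (1-a)/4]] \<in> carrier_mat 2 2"
  proof -
    have "length [[(1-a)/4, -(1-a)/4], [-(1-a)/4, (1-a)/4::real]] = 2" by simp
    thus ?thesis unfolding mat_of_rows_list_def by (metis mat_carrier)
  qed
  show "dim_row (D_mat a) = dim_row (mat_of_rows_list 2 [[(1-a)/4, -(1-a)/4], [-(1-a)/4, (1-a)/4]])"
    "dim_col (D_mat a) = dim_col (mat_of_rows_list 2 [[(1-a)/4, -(1-a)/4], [-(1-a)/4, (1-a)/4]])"
    using D_car[of a] mc by auto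
  fix i j assume "i < dim_row (mat_of_rows_list 2 [[(1-a)/4, -(1-a)/4], [-(1-a)/4, (1-a)/4]])"
    "j < dim_col (mat_of_rows_list 2 [[(1-a)/4, -(1-a)/4], [-(1-a)/4, (1-a)/4]])"
  hence ij: "i < 2" "j < 2" using mc by auto
  have AP: "(A_mat a * P_mat) $$ (i,j) = A_mat a $$ (i,0) * P_mat $$ (0,j) + A_mat a $$ (i,1) * P_mat $$ (1,j)"
    by (rule mult2[OF A_car P_car ij])
  have APc: "A_mat a * P_mat \<in> carrier_mat 2 2" by (rule mult_carrier_mat[OF A_car P_car])
  have Dij: "D_mat a $$ (i,j) = (1/2) * (P_mat $$ (i,j) - (A_mat a * P_mat) $$ (i,j))"
  proof -
    have "D_mat a $$ (i,j) = (1/2) * ((P_mat - A_mat a * P_mat) $$ (i,j))"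
      unfolding D_mat_def by (rule index_smult_mat) (use ij APc in auto)
    also have "(P_mat - A_mat a * P_mat) $$ (i,j) = P_mat $$ (i,j) - (A_mat a * P_mat) $$ (i,j)"
      by (rule index_minus_mat) (use ij APc in auto)
    finally show ?thesis .
  qed
  have Pv: "P_mat $$ (0,0) = 1/2" "P_mat $$ (0,Suc 0) = 0" "P_mat $$ (Suc 0,0) = 0" "P_mat $$ (Suc 0,Suc 0) = 1/2"
    by (simp_all add: P_idx)
  show "D_mat a $$ (i,j) = mat_of_rows_list 2 [[(1-a)/4, -(1-a)/4], [-(1-a)/4, (1-a)/4]] $$ (i,j)"
    unfolding Dij AP using less2[OF ij(1)] less2[OF ij(2)]
    by (elim disjE) (simp_all add: A_idx A_idx' Pv mat_of_rows_list_def field_simps)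
qed

lemma V_form:
  fixes a :: real and U S V :: "real mat"
  assumes a: "0 < a" "a < 1" and ed: "eigdecomp (D_mat a) U S"
    and Vd: "V = U * diag_sqrt S * transpose_mat U"
  shows "\<exists>p\<ge>0. 8 * p^2 = 1 - a \<and> V = mat_of_rows_list 2 [[p,-p],[-p,p]]"
proof -
  define R where "R = diag_sqrt S"
  define T where "T = transpose_mat U"
  have U: "U \<in> carrier_mat 2 2" and S: "S \<in> carrier_mat 2 2" and UU: "T * U = 1\<^sub>m 2"
    and Soff: "\<And>i j. i<2 \<Longrightarrow> j<2 \<Longrightarrow> i \<noteq> j \<Longrightarrow> S $$ (i,j) = 0"
    and Spos: "\<And>i. i < 2 \<Longrightarrow> S $$ (i,i) \<ge> 0" and D: "D_mat a = U * S * T"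
    using ed unfolding eigdecomp_def T_def by auto
  have R: "R \<in> carrier_mat 2 2" using S unfolding R_def diag_sqrt_def by auto
  have T: "T \<in> carrier_mat 2 2" using U unfolding T_def by auto
  have Ridx: "R $$ (i,j) = (if i = j then sqrt (S $$ (i,i)) else 0)" if "i<2" "j<2" for i j
    using S that unfolding R_def diag_sqrt_def by auto
  have RR: "R * R = S"
  proof (rule eq_matI)
    fix i j assume "i < dim_row S" "j < dim_col S"
    hence ij: "i < 2" "j < 2" using S by auto
    show "(R * R) $$ (i,j) = S $$ (i,j)"
    proof -
      have R00: "R $$ (0,0) = sqrt (S$$(0,0))" and R01: "R $$ (0,1) = 0" and R10: "R $$ (1,0) = 0"
        and R11: "R $$ (1,1) = sqrt (S$$(1,1))" using Ridx by auto
      have s0: "sqrt (S$$(0,0)) * sqrt (S$$(0,0)) = S$$(0,0)" using Spos[of 0] by simp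
      have s1: "sqrt (S$$(1,1)) * sqrt (S$$(1,1)) = S$$(1,1)" using Spos[of 1] by simp
      have S01: "S$$(0,1) = 0" "S$$(1,0) = 0" using Soff by auto
      show ?thesis unfolding mult2[OF R R ij] using less2[OF ij(1)] less2[OF ij(2)]
        by (elim disjE) (simp_all only: R00 R01 R10 R11 s0 s1 S01 mult_zero_left mult_zero_right add_0_left add_0_right)
    qed
  qed (use R S in auto)
  have VV: "V * V = D_mat a"
  proof -
    have "V * V = U * (R * (T * (U * (R * T))))"
    proof -
      have RT: "R * T \<in> carrier_mat 2 2" using R T by simp
      have URT: "U * (R * T) \<in> carrier_mat 2 2" using U RT by simp
      have TURT: "T * (U * (R * T)) \<in> carrier_mat 2 2" using T URT by simp
      have "V = U * (R * T)" unfolding Vd R_def[symmetric] T_def[symmetric] using assoc_mult_mat[OF U R T] .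
      hence "V * V = U * (R * T) * (U * (R * T))" by simp
      also have "\<dots> = U * ((R * T) * (U * (R * T)))" using assoc_mult_mat[OF U RT URT] .
      also have "(R * T) * (U * (R * T)) = R * (T * (U * (R * T)))" using assoc_mult_mat[OF R T URT] .
      finally show ?thesis .
    qed
    also have "T * (U * (R * T)) = (T * U) * (R * T)"
      using assoc_mult_mat[OF T U mult_carrier_mat[OF R T]] by simp
    also have "\<dots> = R * T" using UU R T by simp
    also have "R * (R * T) = (R * R) * T"
      using assoc_mult_mat[OF R R T] by simp
    also note RR
    also have "U * (S * T) = U * S * T"
      using assoc_mult_mat[OF U S T] by simp
    finally show ?thesis using D by simp
  qed
  define r0 r1 where "r0 = sqrt (S $$ (0,0))" and "r1 = sqrt (S $$ (1,1))"
  have UR: "(U * R) $$ (i,k) = U $$ (i,k) * (if k = 0 then r0 else r1)" if "i<2" "k<2" for i k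
    using mult2[OF U R that] less2[OF that(2)] Ridx unfolding r0_def r1_def by auto
  have URc: "U * R \<in> carrier_mat 2 2" using U R by auto
  have Vidx: "V $$ (i,j) = U$$(i,0) * r0 * U$$(j,0) + U$$(i,1) * r1 * U$$(j,1)" if "i<2" "j<2" for i j
  proof -
    have V': "V = U * R * T" unfolding Vd R_def T_def ..
    have Tidx: "T $$ (k,j) = U $$ (j,k)" if "k < 2" for k using that \<open>j<2\<close> U unfolding T_def by auto
    show ?thesis using mult2[OF URc T that] UR[OF that(1), of 0] UR[OF that(1), of 1]
      Tidx[of 0] Tidx[of 1] unfolding V' by simp
  qed
  have Vc: "V \<in> carrier_mat 2 2" using URc T unfolding Vd R_def[symmetric] T_def[symmetric] by auto
  define x y z where "x = V $$ (0,0)" and "y = V $$ (0,1)" and "z = V $$ (1,1)"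
  have y': "V $$ (1,0) = y" unfolding x_def y_def z_def using Vidx by simp
  have r0: "r0 \<ge> 0" "r1 \<ge> 0" unfolding r0_def r1_def using Spos[of 0] Spos[of 1] by auto
  have xe: "x = r0 * (U$$(0,0))^2 + r1 * (U$$(0,1))^2" using Vidx[of 0 0] unfolding x_def
    by (simp add: power2_eq_square)
  have ze: "z = r0 * (U$$(1,0))^2 + r1 * (U$$(1,1))^2" using Vidx[of 1 1] unfolding z_def
    by (simp add: power2_eq_square)
  have x0: "x \<ge> 0" "z \<ge> 0" unfolding xe ze using r0 by simp_all
  have De: "\<And>i j. i < 2 \<Longrightarrow> j < 2 \<Longrightarrow> (V*V) $$ (i,j) = V$$(i,0)*V$$(0,j) + V$$(i,1)*V$$(1,j)"
    using mult2[OF Vc Vc] by auto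
  have e1: "x*x + y*y = (1-a)/4" using De[of 0 0] VV y' unfolding x_def y_def z_def D_explicit
    by (simp add: mat_of_rows_list_def)
  have e2: "x*y + y*z = -(1-a)/4" using De[of 0 1] VV y' unfolding x_def y_def z_def D_explicit
    by (simp add: mat_of_rows_list_def)
  have e3: "y*y + z*z = (1-a)/4" using De[of 1 1] VV y' unfolding x_def y_def z_def D_explicit
    by (simp add: mat_of_rows_list_def)
  have "x*x = z*z" using e1 e3 by linarith
  hence "x^2 = z^2" by (simp add: power2_eq_square)
  hence xz: "x = z" using x0 by (simp add: power2_eq_iff_nonneg)
  have "(x+y)*(x+y) = 0" using e1 e2 xz by (simp add: algebra_simps) 
  hence yx: "y = -x" by simp
  have p: "8 * x^2 = 1 - a" using e1 yx by (simp add: power2_eq_square)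
  have "V = mat_of_rows_list 2 [[x,-x],[-x,x]]"
  proof (rule eq_matI)
    fix i j assume "i < dim_row (mat_of_rows_list 2 [[x,-x],[-x,x]])" "j < dim_col (mat_of_rows_list 2 [[x,-x],[-x,x]])"
    hence ij: "i < 2" "j < 2" by (simp_all add: mat_of_rows_list_def)
    show "V $$ (i,j) = mat_of_rows_list 2 [[x,-x],[-x,x]] $$ (i,j)"
      using less2[OF ij(1)] less2[OF ij(2)] y' xz yx unfolding x_def[symmetric] y_def[symmetric] z_def[symmetric]
      by (auto simp: mat_of_rows_list_def x_def y_def z_def)
  qed (use Vc in \<open>auto simp: mat_of_rows_list_def\<close>)
  thus ?thesis using p x0 by blast
qed
lemma A_dims: "dim_row (A_mat a) = 2" "dim_col (A_mat a) = 2" using A_car[of a] by auto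

lemma Abar_dims: "dim_row (Abar a) = 2" "dim_col (Abar a) = 2"
  unfolding Abar_def using A_dims[of a] by simp_all

lemma Abar_car: "Abar a \<in> carrier_mat 2 2" using Abar_dims[of a] by (rule carrier_matI)

lemma A_idx2: "j < 2 \<Longrightarrow> k < 2 \<Longrightarrow> A_mat a $$ (j,k) = (if j = k then a else 1 - a)"
  using less2[of j] less2[of k] A_idx[of a] by auto

lemma Abar_idx: assumes "j < 2" "k < 2"
  shows "Abar a $$ (j,k) = (if j = k then (1+a)/2 else (1-a)/2)"
proof -
  have "Abar a $$ (j,k) = 1/2 * ((1\<^sub>m 2 + A_mat a) $$ (j,k))"
    unfolding Abar_def using assms A_dims[of a] by simp
  also have "(1\<^sub>m 2 + A_mat a) $$ (j,k) = 1\<^sub>m 2 $$ (j,k) + A_mat a $$ (j,k)"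
    using assms A_dims[of a] by simp
  finally show ?thesis using assms by (cases "j = k") (simp_all add: A_idx2 field_simps)
qed

definition Vp :: "real \<Rightarrow> real mat" where "Vp p = mat_of_rows_list 2 [[p,-p],[-p,p]]"

lemma Vp_car: "Vp p \<in> carrier_mat 2 2"
proof -
  have "length [[p,-p],[-p,p]] = 2" by simp
  thus ?thesis unfolding Vp_def mat_of_rows_list_def by (metis mat_carrier)
qed

lemma Vp_dims: "dim_row (Vp p) = 2" "dim_col (Vp p) = 2" using Vp_car[of p] by auto

lemma Vp_idx: assumes "j < 2" "k < 2" shows "Vp p $$ (j,k) = (if j = k then p else -p)"
  using less2[OF assms(1)] less2[OF assms(2)] unfolding Vp_def
  by (auto simp: mat_of_rows_list_def)

lemma VA_idx: assumes "j < 2" "k < 2" shows "(Vp p * Abar a) $$ (j,k) = (if j = k then p*a else -(p*a))"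
  unfolding mult2[OF Vp_car Abar_car assms]
  using less2[OF assms(1)] less2[OF assms(2)]
  by (elim disjE) (simp_all add: Vp_idx Abar_idx field_simps)

lemma Q_idx: assumes "j < 4" "k < 4"
  shows "Q_d a \<mu> \<sigma>2 (Vp p) $$ (j,k) =
    (if j < 2 then if k < 2 then (1 - \<mu>*\<sigma>2) * (if j = k then (1+a)/2 else (1-a)/2)
                  else -2 * (if j = k - 2 then p else -p)
     else if k < 2 then (1 - \<mu>*\<sigma>2) * (if j - 2 = k then p*a else -(p*a))
     else (if j = k then (1+a)/2 else (1-a)/2))"
proof -
  have d: "dim_row ((1 - \<mu> * \<sigma>2) \<cdot>\<^sub>m Abar a) = 2" "dim_col ((1 - \<mu> * \<sigma>2) \<cdot>\<^sub>m Abar a) = 2"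
    "dim_row (Abar a) = 2" "dim_col (Abar a) = 2"
    using Abar_dims[of a] by simp_all
  have e: "Q_d a \<mu> \<sigma>2 (Vp p) $$ (j,k) = (if j < 2 then
      if k < 2 then ((1 - \<mu> * \<sigma>2) \<cdot>\<^sub>m Abar a) $$ (j,k) else ((-2) \<cdot>\<^sub>m Vp p) $$ (j,k - 2)
      else if k < 2 then ((1 - \<mu> * \<sigma>2) \<cdot>\<^sub>m (Vp p * Abar a)) $$ (j - 2, k) else Abar a $$ (j - 2, k - 2))"
  proof -
    have lt: "j < dim_row ((1 - \<mu> * \<sigma>2) \<cdot>\<^sub>m Abar a) + dim_row (Abar a)"
      "k < dim_col ((1 - \<mu> * \<sigma>2) \<cdot>\<^sub>m Abar a) + dim_col (Abar a)" using assms unfolding d by simp_all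
    show ?thesis unfolding Q_d_def index_mat_four_block(1)[OF lt] d ..
  qed
  have dva: "dim_row (Vp p * Abar a) = 2" "dim_col (Vp p * Abar a) = 2" using Vp_dims[of p] Abar_dims[of a] by simp_all
  show ?thesis unfolding e using assms Vp_dims[of p] Abar_dims[of a] dva
    by (auto simp: Abar_idx Vp_idx VA_idx simp del: index_mult_mat)
qed

lemma Q_dims: "dim_row (Q_d a \<mu> \<sigma>2 V) = dim_row (Abar a) + dim_row (Abar a)"
   "dim_col (Q_d a \<mu> \<sigma>2 V) = dim_col (Abar a) + dim_col (Abar a)"
  unfolding Q_d_def by simp_all

lemma Q_car: "Q_d a \<mu> \<sigma>2 V \<in> carrier_mat 4 4"
  using Q_dims[of a \<mu> \<sigma>2 V] Abar_dims[of a] by (intro carrier_matI) simp_all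

lemma sum4: "(\<Sum>k<(4::nat). f k) = f 0 + f 1 + f 2 + (f 3 :: real)"
  by (simp add: eval_nat_numeral)
lemma mv3:
  fixes A :: "'a::comm_ring_1 mat"
  assumes "A \<in> carrier_mat 3 3" "v \<in> carrier_vec 3" "i < 3"
  shows "(A *\<^sub>v v) $ i = A$$(i,0)*v$0 + A$$(i,1)*v$1 + A$$(i,2)*v$2"
proof -
  have "(A *\<^sub>v v) $ i = (\<Sum>k\<in>{0..<3}. A$$(i,k) * v$k)"
    using assms by (auto simp: scalar_prod_def)
  also have "\<dots> = A$$(i,0)*v$0 + A$$(i,1)*v$1 + A$$(i,2)*v$2"
    by (simp add: numeral_3_eq_3 numeral_2_eq_2 atLeast0_lessThan_Suc add.commute add.left_commute)
  finally show ?thesis .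
qed

lemma E_car: "E_d a \<mu> \<sigma>2 \<in> carrier_mat 3 3"
proof -
  have "length [[1 - \<mu> * \<sigma>2, 0, 0],
      [0, (1 - \<mu> * \<sigma>2) * a, - sqrt (2 - 2 * a)],
      [0, (1 - \<mu> * \<sigma>2) * a * sqrt ((1 - a) / 2), a]] = 3" by simp
  thus ?thesis unfolding E_d_def mat_of_rows_list_def by (metis mat_carrier)
qed

lemma E_idx:
  "E_d a \<mu> \<sigma>2 $$ (0,0) = 1 - \<mu> * \<sigma>2" "E_d a \<mu> \<sigma>2 $$ (0,1) = 0" "E_d a \<mu> \<sigma>2 $$ (0,2) = 0"
  "E_d a \<mu> \<sigma>2 $$ (1,0) = 0" "E_d a \<mu> \<sigma>2 $$ (1,1) = (1 - \<mu> * \<sigma>2) * a" "E_d a \<mu> \<sigma>2 $$ (1,2) = - sqrt (2 - 2 * a)"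
  "E_d a \<mu> \<sigma>2 $$ (2,0) = 0" "E_d a \<mu> \<sigma>2 $$ (2,1) = (1 - \<mu> * \<sigma>2) * a * sqrt ((1 - a) / 2)" "E_d a \<mu> \<sigma>2 $$ (2,2) = a"
  unfolding E_d_def by (simp_all add: mat_of_rows_list_def)

lemma quad_from:
  fixes C A S1 S2 ev x y :: complex
  assumes "C*A*x - S2*y = ev*x" "C*A*S1*x + A*y = ev*y" "S1*S2 = 1 - A"
  shows "(ev^2 - A*(1+C)*ev + C*A)*x = 0"
proof -
  have h1: "(C*A - ev)*x - S2*y = 0" using assms(1) by (simp add: algebra_simps)
  have h2: "(A - ev)*y + C*A*S1*x = 0" using assms(2) by (simp add: algebra_simps)
  have h3: "S1*S2 - (1 - A) = 0" using assms(3) by simp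
  have "(ev^2 - A*(1+C)*ev + C*A)*x = (A - ev)*((C*A - ev)*x - S2*y) + S2*((A - ev)*y + C*A*S1*x) - C*A*x*(S1*S2 - (1 - A))"
    by (simp add: algebra_simps power2_eq_square)
  also have "\<dots> = 0" unfolding h1 h2 h3 by simp
  finally show ?thesis .
qed

lemma E_eig:
  fixes a \<mu> \<sigma>2 :: real and ev :: complex
  assumes a: "0 < a" "a < 1" and m: "0 < \<mu> * \<sigma>2" "\<mu> * \<sigma>2 < 2"
    and ev: "eigenvalue (map_mat complex_of_real (E_d a \<mu> \<sigma>2)) ev"
  shows "cmod ev < 1"
proof -
  define E where "E = map_mat complex_of_real (E_d a \<mu> \<sigma>2)"
  define c where "c = 1 - \<mu> * \<sigma>2"
  have c: "-1 < c" "c < 1" using m unfolding c_def by auto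
  have Ec: "E \<in> carrier_mat 3 3" unfolding E_def using E_car[of a \<mu> \<sigma>2] by simp
  have Ei: "\<And>i j. i < 3 \<Longrightarrow> j < 3 \<Longrightarrow> E $$ (i,j) = complex_of_real (E_d a \<mu> \<sigma>2 $$ (i,j))"
    unfolding E_def using E_car[of a \<mu> \<sigma>2] by auto
  from ev obtain v where v: "v \<in> carrier_vec 3" "v \<noteq> 0\<^sub>v 3" "E *\<^sub>v v = ev \<cdot>\<^sub>v v"
    unfolding eigenvalue_def eigenvector_def E_def[symmetric] using Ec by auto
  define s1 s2 where "s1 = sqrt ((1 - a) / 2)" and "s2 = sqrt (2 - 2 * a)"
  have s12: "s1 * s2 = 1 - a"
  proof -
    have "s1 * s2 = sqrt ((1 - a) / 2 * (2 - 2 * a))" unfolding s1_def s2_def by (rule real_sqrt_mult[symmetric])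
    also have "(1 - a) / 2 * (2 - 2 * a) = (1 - a)^2" by (simp add: power2_eq_square field_simps)
    finally show ?thesis using a by simp
  qed
  have s2p: "s2 > 0" unfolding s2_def using a by simp
  have eq: "(E *\<^sub>v v) $ i = ev * v $ i" if "i < 3" for i using v(3) that v(1)
    by (metis carrier_vecD index_smult_vec(1))
  have e0: "of_real c * v$0 = ev * v$0"
    using eq[of 0] mv3[OF Ec v(1), of 0] Ei E_idx by (simp add: c_def)
  have e1: "of_real c * of_real a * v$1 - of_real s2 * v$2 = ev * v$1"
    using eq[of 1] mv3[OF Ec v(1), of 1] Ei E_idx by (simp add: c_def s2_def)
  have e2: "of_real c * of_real a * of_real s1 * v$1 + of_real a * v$2 = ev * v$2"
    using eq[of 2] mv3[OF Ec v(1), of 2] Ei E_idx by (simp add: c_def s1_def)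
  have nz: "v$0 \<noteq> 0 \<or> v$1 \<noteq> 0 \<or> v$2 \<noteq> 0"
  proof (rule ccontr)
    assume "\<not> ?thesis"
    hence "v = 0\<^sub>v 3" using v(1) by (intro eq_vecI) (auto simp: less_Suc_eq numeral_3_eq_3 numeral_2_eq_2)
    thus False using v(2) by simp
  qed
  show ?thesis
  proof (cases "v$0 = 0")
    case False
    hence "ev = of_real c" using e0 by simp
    thus ?thesis using c by simp
  next
    case True
    have "v$1 \<noteq> 0"
    proof
      assume h: "v$1 = 0"
      hence "v$2 \<noteq> 0" using nz True by simp
      moreover have "of_real s2 * v$2 = 0" using e1 h by simp
      ultimately show False using s2p by simp
    qed
    moreover have "(ev^2 - of_real (a*(1+c)) * ev + of_real (c*a)) * v$1 = 0"
    proof -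
      have s12c: "complex_of_real s1 * complex_of_real s2 = 1 - complex_of_real a"
        using s12 by (metis of_real_mult of_real_1 of_real_diff)
      have "(ev^2 - of_real a * (1 + of_real c) * ev + of_real c * of_real a) * v$1 = 0"
        by (rule quad_from[OF e1 e2 s12c])
      thus ?thesis by simp
    qed
    ultimately have "ev^2 - of_real (a*(1+c)) * ev + of_real (c*a) = 0" by simp
    thus ?thesis by (rule quad_stable[OF a c])
  qed
qed
lemma sum2: "(\<Sum>k<(2::nat). f k) = f 0 + (f 1 :: real)"
  by (simp add: eval_nat_numeral)

theorem lemma6:
  fixes a \<sigma>2 \<mu> :: real and M :: nat
    and U S V :: "real mat" and Z :: "nat \<Rightarrow> real vec"
  assumes "0 < a" "a < 1" "\<sigma>2 > 0" "M \<ge> 1"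
    and "0 < \<mu> * \<sigma>2" "\<mu> * \<sigma>2 < 2"
    and "eigdecomp (D_mat a) U S" "V = U * diag_sqrt S * transpose_mat U"
    and "Z 0 \<in> carrier_vec (4 * M)"
    and "\<exists>x \<in> carrier_vec (2 * M).
           vec (2 * M) (\<lambda>k. Z 0 $ (2 * M + k)) = kron V (1\<^sub>m M) *\<^sub>v x"
    and "\<And>i. i \<ge> 1 \<Longrightarrow> Z i = kron (Q_d a \<mu> \<sigma>2 V) (1\<^sub>m M) *\<^sub>v Z (i - 1)"
  shows "(\<forall>ev. eigenvalue (map_mat complex_of_real (E_d a \<mu> \<sigma>2)) ev \<longrightarrow> cmod ev < 1)
       \<and> (\<forall>k < 4 * M. (\<lambda>i. Z i $ k) \<longlonglongrightarrow> 0)"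
proof
  show "\<forall>ev. eigenvalue (map_mat complex_of_real (E_d a \<mu> \<sigma>2)) ev \<longrightarrow> cmod ev < 1"
    using E_eig[OF assms(1,2,5,6)] by blast
next
  obtain p where p: "p \<ge> 0" "8 * p^2 = 1 - a" and Vv: "V = Vp p"
    using V_form[OF assms(1,2,7,8)] unfolding Vp_def by blast
  define c where "c = 1 - \<mu> * \<sigma>2"
  have c: "-1 < c" "c < 1" using assms(5,6) unfolding c_def by auto
  define Q where "Q = Q_d a \<mu> \<sigma>2 V"
  define K where "K = kron Q (1\<^sub>m M)"
  have Qc: "Q \<in> carrier_mat 4 4" unfolding Q_def by (rule Q_car)
  have Kd: "dim_row K = 4 * M" unfolding K_def kron_dims using carrier_matD(1)[OF Qc] by simp
  have Zs: "Z (Suc i) = K *\<^sub>v Z i" for i using assms(11)[of "Suc i"] unfolding K_def Q_def by simp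
  have Zc: "Z i \<in> carrier_vec (4 * M)" for i
  proof (induction i)
    case 0 show ?case by (rule assms(9))
  next
    case (Suc i) show ?case unfolding Zs by (rule carrier_vecI) (simp add: Kd)
  qed
  have Qi: "Q $$ (j,k) =
    (if j < 2 then if k < 2 then c * (if j = k then (1+a)/2 else (1-a)/2)
                  else -2 * (if j = k - 2 then p else -p)
     else if k < 2 then c * (if j - 2 = k then p*a else -(p*a))
     else (if j = k then (1+a)/2 else (1-a)/2))" if "j < 4" "k < 4" for j k
    unfolding Q_def Vv c_def by (rule Q_idx[OF that])
  obtain y where y: "y \<in> carrier_vec (2 * M)" "vec (2 * M) (\<lambda>k. Z 0 $ (2 * M + k)) = kron V (1\<^sub>m M) *\<^sub>v y"
    using assms(10) by blast
  have Vc: "V \<in> carrier_mat 2 2" unfolding Vv by (rule Vp_car)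
  have conv: "(\<lambda>i. Z i $ (j*M+m)) \<longlonglongrightarrow> 0" if m: "m < M" and j: "j < 4" for m j
  proof -
    define x where "x j i = Z i $ (j*M+m)" for j i
    have xrec: "x j (Suc i) = (\<Sum>k<4. Q $$ (j,k) * x k i)" if "j < 4" for j i
      unfolding x_def Zs K_def by (rule kron_mult[OF Qc Zc that m])
    have r0: "x 0 (Suc i) = c*((1+a)/2) * x 0 i + c*((1-a)/2) * x 1 i + (-2*p) * x 2 i + (2*p) * x 3 i" for i
      using xrec[of 0 i] by (simp add: sum4 Qi)
    have r1: "x 1 (Suc i) = c*((1-a)/2) * x 0 i + c*((1+a)/2) * x 1 i + (2*p) * x 2 i + (-2*p) * x 3 i" for i
      using xrec[of 1 i] by (simp add: sum4 Qi)
    have r2: "x 2 (Suc i) = (c*(p*a)) * x 0 i + (-(c*(p*a))) * x 1 i + ((1+a)/2) * x 2 i + ((1-a)/2) * x 3 i" for i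
      using xrec[of 2 i] by (simp add: sum4 Qi)
    have r3: "x 3 (Suc i) = (-(c*(p*a))) * x 0 i + (c*(p*a)) * x 1 i + ((1-a)/2) * x 2 i + ((1+a)/2) * x 3 i" for i
      using xrec[of 3 i] by (simp add: sum4 Qi)
    define Wp Wm Yp Ym where "Wp i = x 0 i + x 1 i" and "Wm i = x 0 i - x 1 i"
      and "Yp i = x 2 i + x 3 i" and "Ym i = x 2 i - x 3 i" for i
    have rWp: "Wp (Suc i) = c * Wp i" for i unfolding Wp_def r0 r1 by (simp add: field_simps)
    have rWm: "Wm (Suc i) = c * a * Wm i - 4 * p * Ym i" for i unfolding Wm_def Ym_def r0 r1 by (simp add: field_simps)
    have rYp: "Yp (Suc i) = Yp i" for i unfolding Yp_def r2 r3 by (simp add: field_simps)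
    have rYm: "Ym (Suc i) = 2 * c * p * a * Wm i + a * Ym i" for i unfolding Wm_def Ym_def r2 r3 by (simp add: field_simps)
    have Yp0: "Yp 0 = 0"
    proof -
      have m2: "m < 2 * M" "M + m < 2 * M" using m by auto
      have "Z 0 $ (2*M + m) = (kron V (1\<^sub>m M) *\<^sub>v y) $ (0*M+m)"
        using arg_cong[OF y(2), of "\<lambda>v. v $ m"] m2 by simp
      also have "\<dots> = (\<Sum>j'<2. V $$ (0,j') * y $ (j'*M+m))" by (rule kron_mult[OF Vc y(1) _ m]) simp
      finally have z2: "Z 0 $ (2*M + m) = p * y $ m - p * y $ (M+m)"
        by (simp add: sum2 Vv Vp_idx)
      have "Z 0 $ (2*M + (M+m)) = (kron V (1\<^sub>m M) *\<^sub>v y) $ (1*M+m)"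
        using arg_cong[OF y(2), of "\<lambda>v. v $ (M+m)"] m2 by simp
      also have "\<dots> = (\<Sum>j'<2. V $$ (1,j') * y $ (j'*M+m))" by (rule kron_mult[OF Vc y(1) _ m]) simp
      finally have z3': "Z 0 $ (2*M + (M+m)) = - p * y $ m + p * y $ (M+m)"
        by (simp add: sum2 Vv Vp_idx)
      have "2*M + (M+m) = 3*M + m" by simp
      with z3' have z3: "Z 0 $ (3*M + m) = - p * y $ m + p * y $ (M+m)" by simp
      show ?thesis unfolding Yp_def x_def using z2 z3 by simp
    qed
    have Ypz: "Yp i = 0" for i by (induction i) (simp_all add: Yp0 rYp)
    have Wpc: "Wp i = c ^ i * Wp 0" for i by (induction i) (simp_all add: rWp)
    have "(\<lambda>i. c ^ i * Wp 0) \<longlonglongrightarrow> 0 * Wp 0"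
      by (intro tendsto_mult LIMSEQ_power_zero tendsto_const) (use c in simp)
    moreover have "Wp = (\<lambda>i. c ^ i * Wp 0)" using Wpc by (intro ext)
    ultimately have Wpl: "Wp \<longlonglongrightarrow> 0" by simp
    have roots: "cmod z < 1" if "z^2 - of_real (a*(1+c)) * z + of_real (c*a) = 0" for z :: complex
      by (rule quad_stable[OF assms(1,2) c that])
    have Wml: "Wm \<longlonglongrightarrow> 0"
    proof (rule rec2_real[OF roots])
      fix i
      have h3: "4 * p * Ym i = c * a * Wm i - Wm (Suc i)" using rWm[of i] by simp
      have "Wm (Suc (Suc i)) = c*a*Wm (Suc i) - 4*p*(2*c*p*a*Wm i + a*Ym i)" by (simp add: rWm rYm)
      also have "\<dots> = c*a*Wm (Suc i) - (8*p^2)*c*a*Wm i - a*(4*p*Ym i)" by (simp add: algebra_simps power2_eq_square)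
      also have "\<dots> = c*a*Wm (Suc i) - (1-a)*c*a*Wm i - a*(c*a*Wm i - Wm (Suc i))" unfolding p(2) h3 ..
      also have "\<dots> = a*(1+c)*Wm (Suc i) - c*a*Wm i" by (simp add: algebra_simps)
      finally show "Wm (Suc (Suc i)) = a*(1+c)*Wm (Suc i) - c*a*Wm i" .
    qed
    have Yml: "Ym \<longlonglongrightarrow> 0"
    proof (rule rec2_real[OF roots])
      fix i
      have h3: "2*c*p*a*Wm i = Ym (Suc i) - a * Ym i" using rYm[of i] by simp
      have "Ym (Suc (Suc i)) = 2*c*p*a*(c * a * Wm i - 4 * p * Ym i) + a*Ym (Suc i)" by (simp add: rWm rYm)
      also have "\<dots> = c*a*(2*c*p*a*Wm i) - (8*p^2)*c*a*Ym i + a*Ym (Suc i)" by (simp add: algebra_simps power2_eq_square)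
      also have "\<dots> = c*a*(Ym (Suc i) - a * Ym i) - (1-a)*c*a*Ym i + a*Ym (Suc i)" unfolding p(2) h3 ..
      also have "\<dots> = a*(1+c)*Ym (Suc i) - c*a*Ym i" by (simp add: algebra_simps)
      finally show "Ym (Suc (Suc i)) = a*(1+c)*Ym (Suc i) - c*a*Ym i" .
    qed
    have x0: "x 0 = (\<lambda>i. (Wp i + Wm i) / 2)" by (rule ext) (simp add: Wp_def Wm_def)
    have x1: "x 1 = (\<lambda>i. (Wp i - Wm i) / 2)" by (rule ext) (simp add: Wp_def Wm_def)
    have x2: "x 2 = (\<lambda>i. (Yp i + Ym i) / 2)" by (rule ext) (simp add: Yp_def Ym_def)
    have x3: "x 3 = (\<lambda>i. (Yp i - Ym i) / 2)" by (rule ext) (simp add: Yp_def Ym_def)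
    have "Yp = (\<lambda>i. 0)" using Ypz by (intro ext)
    hence Ypl: "Yp \<longlonglongrightarrow> 0" by simp
    have all: "x j \<longlonglongrightarrow> 0" if "j < 4" for j
    proof -
      have "j = 0 \<or> j = 1 \<or> j = 2 \<or> j = 3" using that by auto
      moreover have "x 0 \<longlonglongrightarrow> 0" unfolding x0 using tendsto_divide[OF tendsto_add[OF Wpl Wml], of "\<lambda>_. 2" 2] by simp
      moreover have "x 1 \<longlonglongrightarrow> 0" unfolding x1 using tendsto_divide[OF tendsto_diff[OF Wpl Wml], of "\<lambda>_. 2" 2] by simp
      moreover have "x 2 \<longlonglongrightarrow> 0" unfolding x2 using tendsto_divide[OF tendsto_add[OF Ypl Yml], of "\<lambda>_. 2" 2] by simp
      moreover have "x 3 \<longlonglongrightarrow> 0" unfolding x3 using tendsto_divide[OF tendsto_diff[OF Ypl Yml], of "\<lambda>_. 2" 2] by simp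
      ultimately show ?thesis by auto
    qed
    show ?thesis using all[OF j] unfolding x_def .
  qed
  show "\<forall>k < 4 * M. (\<lambda>i. Z i $ k) \<longlonglongrightarrow> 0"
  proof (intro allI impI)
    fix k assume k: "k < 4 * M"
    have M0: "M > 0" using assms(4) by simp
    have kk: "k = (k div M) * M + k mod M" by simp
    have "k div M < 4" using k M0 by (simp add: less_mult_imp_div_less)
    moreover have "k mod M < M" using M0 by simp
    ultimately have "(\<lambda>i. Z i $ ((k div M) * M + k mod M)) \<longlonglongrightarrow> 0" using conv by blast
    thus "(\<lambda>i. Z i $ k) \<longlonglongrightarrow> 0" using kk by simp
  qed
qed

end
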